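(* Let ${\cal G}$ be a closed graph, $\nu>2$, and $f\in C^1_{\rm Dir}({\cal G})$ with $\int f\,d{\cal V}=0$. Then $$\|\nabla f\|_2\ge\bigl(\widetilde I_\nu({\cal G})\rho_{\sup}^{-1/2}/2\bigr)\,\|f\|_2^{1+(2/\nu)}\,\|f\|_1^{-2/\nu}.$$
   Context: A closed graph ${\cal G}$ consists of a finite undirected graph $(V,E)$ (multiple edges, self-loops allowed), edge lengths $\ell_e>0$, empty boundary, a vertex measure ${\cal V}$ (supported on $V$, ${\cal V}(v)>0$) and an edge measure ${\cal E}$ (zero on vertices, $a_e>0$ times Lebesgue measure on the interior of edge $e$); ${\cal G}$ is identified with its geometric realization (closed interval of length $\ell_e$ joining the endpoints of each $e$). $C^1_{\rm Dir}({\cal G})$: continuous functions, uniformly continuously differentiable on each open edge. $\|f\|_q$ are $L^q({\cal V})$ norms; $\|\nabla f\|_2$ is the $L^2({\cal E})$ norm of $|\nabla f|$. $\rho_{\sup}=\max_v{\cal V}(v)^{-1}\sum_{e\ni v}{\cal E}(e)/2$. For open $\Omega$ with finite boundary, ${\cal A}(\partial\Omega)=\sum_{x\in\partial\Omega\setminus V}a_{e(x)}+\sum_{v\in\partial\Omega\cap V}\sum_{e:\,v\in\overline{\Omega\cap e^\circ}}a_e$ ($e(x)$ the edge containing $x$, $e^\circ$ open interior of $e$). $\widetilde I_\nu({\cal G})=\inf_\Omega{\cal A}(\partial\Omega)\min({\cal V}(\Omega),{\cal V}(\complement\Omega))^{(1/\nu)-1}$ over open $\Omega$ with finite boundary. 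*)

theory Defs
  imports "HOL-Analysis.Analysis"
begin

text \<open>Combinatorial data of a closed graph: vertex set, edge set, endpoints of
  each edge (multiple edges and self-loops allowed), edge lengths, vertex
  measure weights and edge-measure densities a_e.\<close>
record ('v, 'e) cgraph =
  verts :: "'v set"
  edges :: "'e set"
  src   :: "'e \<Rightarrow> 'v"
  tgt   :: "'e \<Rightarrow> 'v"
  len   :: "'e \<Rightarrow> real"
  vmeas :: "'v \<Rightarrow> real"
  ewt   :: "'e \<Rightarrow> real"

definition closed_graph :: "('v, 'e) cgraph \<Rightarrow> bool" where
  "closed_graph G \<longleftrightarrow> finite (verts G) \<and> finite (edges G) \<and>
     (\<forall>e\<in>edges G. src G e \<in> verts G \<and> tgt G e \<in> verts G \<and> 0 < len G e \<and> 0 < ewt G e) \<and>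
     (\<forall>v\<in>verts G. 0 < vmeas G v)"

text \<open>Points of the geometric realization: vertices, and interior points of edges
  (EPt e t with 0 < t < len e).\<close>
datatype ('v, 'e) gpoint = Vtx 'v | EPt 'e real

definition gcarrier :: "('v, 'e) cgraph \<Rightarrow> ('v, 'e) gpoint set" where
  "gcarrier G = Vtx ` verts G \<union> {EPt e t | e t. e \<in> edges G \<and> 0 < t \<and> t < len G e}"

definition eparam :: "('v, 'e) cgraph \<Rightarrow> 'e \<Rightarrow> real \<Rightarrow> ('v, 'e) gpoint" where
  "eparam G e t = (if t = 0 then Vtx (src G e) else if t = len G e then Vtx (tgt G e) else EPt e t)"

definition gopen :: "('v, 'e) cgraph \<Rightarrow> ('v, 'e) gpoint set \<Rightarrow> bool" where
  "gopen G S \<longleftrightarrow> S \<subseteq> gcarrier G \<and>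
     (\<forall>e\<in>edges G. openin (top_of_set {0..len G e}) {t \<in> {0..len G e}. eparam G e t \<in> S})"

definition gtop :: "('v, 'e) cgraph \<Rightarrow> ('v, 'e) gpoint topology" where
  "gtop G = topology (gopen G)"

definition edge_interior :: "('v, 'e) cgraph \<Rightarrow> 'e \<Rightarrow> ('v, 'e) gpoint set" where
  "edge_interior G e = {EPt e t | t. 0 < t \<and> t < len G e}"

definition vol :: "('v, 'e) cgraph \<Rightarrow> ('v, 'e) gpoint set \<Rightarrow> real" where
  "vol G S = (\<Sum>v\<in>{v \<in> verts G. Vtx v \<in> S}. vmeas G v)"

definition bdry_weight :: "('v, 'e) cgraph \<Rightarrow> ('v, 'e) gpoint set \<Rightarrow> real" where
  "bdry_weight G \<Omega> =
     (\<Sum>(e, t)\<in>{(e, t). EPt e t \<in> gtop G frontier_of \<Omega>}. ewt G e) +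
     (\<Sum>v\<in>{v \<in> verts G. Vtx v \<in> gtop G frontier_of \<Omega>}.
        \<Sum>e\<in>{e \<in> edges G. Vtx v \<in> gtop G closure_of (\<Omega> \<inter> edge_interior G e)}. ewt G e)"

text \<open>Isoperimetric constant; sets with min(V(\<Omega>), V(complement)) = 0 contribute +\<infinity>
  and are hence omitted.\<close>
definition iso_const :: "('v, 'e) cgraph \<Rightarrow> real \<Rightarrow> real" where
  "iso_const G \<nu> = Inf {bdry_weight G \<Omega> * min (vol G \<Omega>) (vol G (gcarrier G - \<Omega>)) powr (1 / \<nu> - 1) | \<Omega>.
       openin (gtop G) \<Omega> \<and> finite (gtop G frontier_of \<Omega>) \<and>
       0 < min (vol G \<Omega>) (vol G (gcarrier G - \<Omega>))}"

definition rho_sup :: "('v, 'e) cgraph \<Rightarrow> real" where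
  "rho_sup G = Max ((\<lambda>v. (\<Sum>e\<in>{e \<in> edges G. src G e = v \<or> tgt G e = v}. ewt G e * len G e / 2) / vmeas G v)
                     ` verts G)"

definition C1_Dir :: "('v, 'e) cgraph \<Rightarrow> (('v, 'e) gpoint \<Rightarrow> real) \<Rightarrow> bool" where
  "C1_Dir G f \<longleftrightarrow> continuous_map (gtop G) euclideanreal f \<and>
     (\<forall>e\<in>edges G. \<exists>f'. (\<forall>t\<in>{0<..<len G e}. ((\<lambda>s. f (EPt e s)) has_real_derivative f' t) (at t)) \<and>
                        uniformly_continuous_on {0<..<len G e} f')"

definition grad_norm2 :: "('v, 'e) cgraph \<Rightarrow> (('v, 'e) gpoint \<Rightarrow> real) \<Rightarrow> real" where
  "grad_norm2 G f = sqrt (\<Sum>e\<in>edges G. ewt G e *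
       integral {0<..<len G e} (\<lambda>t. (deriv (\<lambda>s. f (EPt e s)) t)\<^sup>2))"

definition vnorm :: "('v, 'e) cgraph \<Rightarrow> real \<Rightarrow> (('v, 'e) gpoint \<Rightarrow> real) \<Rightarrow> real" where
  "vnorm G q f = (\<Sum>v\<in>verts G. vmeas G v * \<bar>f (Vtx v)\<bar> powr q) powr (1 / q)"

end

theory Submission
  imports Defs "HOL-Analysis.Analysis"
begin

lemma istop_gopen: "istopology (gopen G)"
  unfolding istopology_def gopen_def
proof (intro conjI allI impI ballI)
  fix S T assume a: "S \<subseteq> gcarrier G \<and> (\<forall>e\<in>edges G. openin (top_of_set {0..len G e}) {t \<in> {0..len G e}. eparam G e t \<in> S})"
     "T \<subseteq> gcarrier G \<and> (\<forall>e\<in>edges G. openin (top_of_set {0..len G e}) {t \<in> {0..len G e}. eparam G e t \<in> T})"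
  show "S \<inter> T \<subseteq> gcarrier G" using a by blast
  fix e assume e: "e \<in> edges G"
  have "{t \<in> {0..len G e}. eparam G e t \<in> S \<inter> T} = {t \<in> {0..len G e}. eparam G e t \<in> S} \<inter> {t \<in> {0..len G e}. eparam G e t \<in> T}" by blast
  then show "openin (top_of_set {0..len G e}) {t \<in> {0..len G e}. eparam G e t \<in> S \<inter> T}"
    using a e by (simp add: openin_Int)
next
  fix K assume a: "\<forall>S\<in>K. S \<subseteq> gcarrier G \<and> (\<forall>e\<in>edges G. openin (top_of_set {0..len G e}) {t \<in> {0..len G e}. eparam G e t \<in> S})"
  show "\<Union>K \<subseteq> gcarrier G" using a by blast
  fix e assume e: "e \<in> edges G"
  have "{t \<in> {0..len G e}. eparam G e t \<in> \<Union>K} = \<Union>((\<lambda>S. {t \<in> {0..len G e}. eparam G e t \<in> S}) ` K)" by blast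
  then show "openin (top_of_set {0..len G e}) {t \<in> {0..len G e}. eparam G e t \<in> \<Union>K}"
    using a e by (auto intro!: openin_Union)
qed

lemma openin_gtop: "openin (gtop G) = gopen G"
  by (simp add: gtop_def istop_gopen)

lemma eparam_in:
  assumes "closed_graph G" "e \<in> edges G" "t \<in> {0..len G e}"
  shows "eparam G e t \<in> gcarrier G"
  using assms unfolding closed_graph_def eparam_def gcarrier_def by auto

lemma gopen_carrier: assumes G: "closed_graph G" shows "gopen G (gcarrier G)"
  unfolding gopen_def
proof (intro conjI ballI)
  fix e assume e: "e \<in> edges G"
  have "{t \<in> {0..len G e}. eparam G e t \<in> gcarrier G} = topspace (top_of_set {0..len G e})"
    using eparam_in[OF G e] by auto
  then show "openin (top_of_set {0..len G e}) {t \<in> {0..len G e}. eparam G e t \<in> gcarrier G}"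
    by (metis openin_topspace)
qed auto

lemma topspace_gtop: "closed_graph G \<Longrightarrow> topspace (gtop G) = gcarrier G"
  unfolding topspace_def openin_gtop using gopen_carrier[of G] by (auto simp: gopen_def)

lemma gopen_preimage:
  assumes G: "closed_graph G" and c: "\<And>e. e \<in> edges G \<Longrightarrow> continuous_on {0..len G e} (\<lambda>t. \<phi> (eparam G e t))"
    and U: "open U"
  shows "gopen G {p \<in> gcarrier G. \<phi> p \<in> U}"
  unfolding gopen_def
proof (intro conjI ballI)
  fix e assume e: "e \<in> edges G"
  have "{t \<in> {0..len G e}. eparam G e t \<in> {p \<in> gcarrier G. \<phi> p \<in> U}} = {0..len G e} \<inter> (\<lambda>t. \<phi> (eparam G e t)) -` U"
    using eparam_in[OF G e] by auto
  then show "openin (top_of_set {0..len G e}) {t \<in> {0..len G e}. eparam G e t \<in> {p \<in> gcarrier G. \<phi> p \<in> U}}"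
    using continuous_openin_preimage_gen[OF c[OF e] U] by simp
qed auto

lemma cont_eparam:
  assumes G: "closed_graph G" and e: "e \<in> edges G"
  shows "continuous_map (top_of_set {0..len G e}) (gtop G) (eparam G e)"
  unfolding continuous_map_def
proof (intro conjI allI impI Pi_I)
  fix x assume "x \<in> topspace (top_of_set {0..len G e})"
  then show "eparam G e x \<in> topspace (gtop G)" using eparam_in[OF G e] topspace_gtop[OF G] by auto
next
  fix U assume "openin (gtop G) U"
  then have "gopen G U" by (simp add: openin_gtop)
  then show "openin (top_of_set {0..len G e}) {x \<in> topspace (top_of_set {0..len G e}). eparam G e x \<in> U}"
    using e unfolding gopen_def by auto
qed

lemma cont_comp_eparam:
  assumes G: "closed_graph G" and e: "e \<in> edges G" and f: "continuous_map (gtop G) euclideanreal f"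
  shows "continuous_on {0..len G e} (\<lambda>t. f (eparam G e t))"
proof -
  have "continuous_map (top_of_set {0..len G e}) euclideanreal (f \<circ> eparam G e)"
    using continuous_map_compose[OF cont_eparam[OF G e] f] .
  then show ?thesis by (simp add: o_def)
qed

lemma edge_grad:
  assumes G: "closed_graph G" and e: "e \<in> edges G" and f: "C1_Dir G f"
  shows "(f (Vtx (tgt G e)) - f (Vtx (src G e)))\<^sup>2 / len G e
           \<le> integral {0<..<len G e} (\<lambda>t. (deriv (\<lambda>s. f (EPt e s)) t)\<^sup>2)"
proof -
  define l where "l = len G e"
  have l: "0 < l" using G e unfolding closed_graph_def l_def by auto
  obtain f' where d: "\<And>t. t\<in>{0<..<l} \<Longrightarrow> ((\<lambda>s. f (EPt e s)) has_real_derivative f' t) (at t)"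
    and uc: "uniformly_continuous_on {0<..<l} f'"
    using f e unfolding C1_Dir_def l_def by blast
  obtain g where ucg: "uniformly_continuous_on (closure {0<..<l}) g" and eq: "\<And>x. x \<in> {0<..<l} \<Longrightarrow> f' x = g x"
    using uniformly_continuous_on_extension_on_closure[OF uc] by metis
  have gc: "continuous_on {0..l} g" using ucg l uniformly_continuous_imp_continuous by fastforce
  define F where "F t = f (eparam G e t)" for t
  have Fc: "continuous_on {0..l} F" unfolding F_def l_def
    using cont_comp_eparam[OF G e] f unfolding C1_Dir_def by blast
  have Fd: "(F has_vector_derivative g t) (at t)" if t: "t \<in> {0<..<l}" for t
  proof -
    have "(F has_real_derivative f' t) (at t)"
      by (rule has_field_derivative_transform_within_open[OF d[OF t], of "{0<..<l}"])
         (use t in \<open>auto simp: F_def eparam_def l_def\<close>)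
    then show ?thesis using eq[OF t] by (simp add: has_real_derivative_iff_has_vector_derivative)
  qed
  define D where "D = F l - F 0"
  have hg: "(g has_integral D) {0..l}"
    unfolding D_def using fundamental_theorem_of_calculus_interior[of 0 l F g] l Fc Fd by auto
  have FlF0: "F l = f (Vtx (tgt G e))" "F 0 = f (Vtx (src G e))"
    using l by (auto simp: F_def eparam_def l_def)
  have dv: "deriv (\<lambda>s. f (EPt e s)) t = g t" if "t \<in> {0<..<l}" for t
    using DERIV_imp_deriv[OF d[OF that]] eq[OF that] by simp
  have "integral {0<..<l} (\<lambda>t. (deriv (\<lambda>s. f (EPt e s)) t)\<^sup>2) = integral {0<..<l} (\<lambda>t. (g t)\<^sup>2)"
    by (rule integral_cong) (simp add: dv)
  also have "\<dots> = integral {0..l} (\<lambda>t. (g t)\<^sup>2)" by (simp add: integral_open_interval_real)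
  finally have I: "integral {0<..<l} (\<lambda>t. (deriv (\<lambda>s. f (EPt e s)) t)\<^sup>2) = integral {0..l} (\<lambda>t. (g t)\<^sup>2)" .
  define I2 where "I2 = integral {0..l} (\<lambda>t. (g t)\<^sup>2)"
  have g2c: "continuous_on {0..l} (\<lambda>t. (g t)\<^sup>2)" using gc by (intro continuous_intros)
  have h2: "((\<lambda>t. (g t)\<^sup>2) has_integral I2) {0..l}"
    unfolding I2_def using integrable_continuous_real[OF g2c] by (simp add: integrable_integral)
  have hc: "((\<lambda>t. (D/l)\<^sup>2) has_integral (D/l)\<^sup>2 * l) {0..l}"
    using has_integral_const_real[of "(D/l)\<^sup>2" 0 l] l by (simp add: mult.commute)
  have hg2: "((\<lambda>t. (2*(D/l)) * g t) has_integral (2*(D/l)) * D) {0..l}"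
    using has_integral_mult_right[OF hg, of "2*(D/l)"] by simp
  have hall: "((\<lambda>t. (g t)\<^sup>2 - (2*(D/l)) * g t + (D/l)\<^sup>2) has_integral (I2 - (2*(D/l)) * D + (D/l)\<^sup>2 * l)) {0..l}"
    by (intro has_integral_add has_integral_diff h2 hg2 hc)
  have "0 \<le> I2 - (2*(D/l)) * D + (D/l)\<^sup>2 * l"
  proof (rule has_integral_nonneg[OF hall])
    fix t show "0 \<le> (g t)\<^sup>2 - (2*(D/l)) * g t + (D/l)\<^sup>2"
      using zero_le_power2[of "g t - D/l"] by (simp add: power2_diff algebra_simps)
  qed
  moreover have "I2 - (2*(D/l)) * D + (D/l)\<^sup>2 * l = I2 - D\<^sup>2 / l"
    using l by (simp add: field_simps power2_eq_square)
  ultimately have "D\<^sup>2 / l \<le> I2" by simp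
  then show ?thesis using I FlF0 unfolding I2_def D_def l_def by simp
qed

definition ind :: "'v set \<Rightarrow> 'v \<Rightarrow> real" where "ind S v = (if v \<in> S then 1 else 0)"

definition phiS :: "('v, 'e) cgraph \<Rightarrow> 'v set \<Rightarrow> ('v, 'e) gpoint \<Rightarrow> real" where
  "phiS G S p = (case p of Vtx v \<Rightarrow> ind S v
     | EPt e t \<Rightarrow> ind S (src G e) + (ind S (tgt G e) - ind S (src G e)) * t / len G e)"

definition cutw :: "('v, 'e) cgraph \<Rightarrow> 'v set \<Rightarrow> real" where
  "cutw G S = (\<Sum>e\<in>{e\<in>edges G. (src G e \<in> S) \<noteq> (tgt G e \<in> S)}. ewt G e)"

lemma phiS_eparam:
  assumes G: "closed_graph G" and e: "e \<in> edges G"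
  shows "phiS G S (eparam G e t) = ind S (src G e) + (ind S (tgt G e) - ind S (src G e)) * t / len G e"
  using G e unfolding closed_graph_def eparam_def phiS_def by auto

lemma phiS_cont:
  assumes G: "closed_graph G" and e: "e \<in> edges G"
  shows "continuous_on {0..len G e} (\<lambda>t. phiS G S (eparam G e t))"
  unfolding phiS_eparam[OF G e] using G e by (auto simp: closed_graph_def intro!: continuous_intros)

lemma bdry_weight_nonneg: assumes G: "closed_graph G" shows "0 \<le> bdry_weight G \<Omega>"
proof -
  have "EPt e t \<in> gtop G frontier_of \<Omega> \<Longrightarrow> 0 \<le> ewt G e" for e t
    using frontier_of_subset_topspace[of "gtop G" \<Omega>] topspace_gtop[OF G] G
    by (force simp: gcarrier_def closed_graph_def)
  then show ?thesis unfolding bdry_weight_def using G unfolding closed_graph_def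
    by (intro add_nonneg_nonneg sum_nonneg) (auto intro: less_imp_le)
qed

lemma iso_bound:
  assumes G: "closed_graph G" and S: "S \<subseteq> verts G" and pos: "0 < (\<Sum>v\<in>S. vmeas G v)"
    and half: "2 * (\<Sum>v\<in>S. vmeas G v) \<le> (\<Sum>v\<in>verts G. vmeas G v)"
  shows "iso_const G \<nu> * (\<Sum>v\<in>S. vmeas G v) powr (1 - 1/\<nu>) \<le> cutw G S"
proof -
  define VS where "VS = (\<Sum>v\<in>S. vmeas G v)"
  define \<Omega> where "\<Omega> = {p \<in> gcarrier G. phiS G S p \<in> {1/2<..}}"
  define C where "C = {p \<in> gcarrier G. phiS G S p \<in> {..<1/2}}"
  define cut where "cut = {e\<in>edges G. (src G e \<in> S) \<noteq> (tgt G e \<in> S)}"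
  have fin: "finite (verts G)" "finite (edges G)" using G by (auto simp: closed_graph_def)
  have oO: "openin (gtop G) \<Omega>" unfolding \<Omega>_def openin_gtop
    by (rule gopen_preimage[OF G phiS_cont[OF G]]) auto
  have oC: "openin (gtop G) C" unfolding C_def openin_gtop
    by (rule gopen_preimage[OF G phiS_cont[OF G]]) auto
  have cl: "closedin (gtop G) (gcarrier G - C)"
    using oC topspace_gtop[OF G] by (metis closedin_diff closedin_topspace)
  have "gtop G closure_of \<Omega> \<subseteq> gcarrier G - C"
    by (rule closure_of_minimal[OF _ cl]) (auto simp: \<Omega>_def C_def)
  moreover have "gtop G interior_of \<Omega> = \<Omega>" using oO by (simp add: interior_of_openin)
  ultimately have fr1: "gtop G frontier_of \<Omega> \<subseteq> gcarrier G - C - \<Omega>" by (auto simp: frontier_of_def)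
  have fr2: "gcarrier G - C - \<Omega> \<subseteq> (\<lambda>e. EPt e (len G e / 2)) ` cut"
  proof
    fix p assume p: "p \<in> gcarrier G - C - \<Omega>"
    then have eq: "phiS G S p = 1/2" by (auto simp: C_def \<Omega>_def)
    from p have "p \<in> gcarrier G" by auto
    then consider v where "p = Vtx v" | e t where "p = EPt e t" "e \<in> edges G" "0 < t" "t < len G e"
      unfolding gcarrier_def by blast
    then show "p \<in> (\<lambda>e. EPt e (len G e / 2)) ` cut"
    proof cases
      case 1 then show ?thesis using eq by (auto simp: phiS_def ind_def split: if_splits)
    next
      case 2
      have l: "len G e > 0" using 2 by auto
      have "(src G e \<in> S) \<noteq> (tgt G e \<in> S) \<and> t = len G e / 2"
        using eq l 2 by (auto simp: phiS_def ind_def field_simps split: if_splits)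
      then show ?thesis using 2 by (auto simp: cut_def)
    qed
  qed
  have fr: "gtop G frontier_of \<Omega> \<subseteq> (\<lambda>e. EPt e (len G e / 2)) ` cut" using fr1 fr2 by blast
  have fincut: "finite cut" using fin by (auto simp: cut_def)
  have finfr: "finite (gtop G frontier_of \<Omega>)" using finite_subset[OF fr] fincut by blast
  have b1: "(\<Sum>(e, t)\<in>{(e, t). EPt e t \<in> gtop G frontier_of \<Omega>}. ewt G e) \<le> cutw G S"
  proof -
    have sub: "{(e, t). EPt e t \<in> gtop G frontier_of \<Omega>} \<subseteq> (\<lambda>e. (e, len G e / 2)) ` cut"
      using fr by auto
    have "(\<Sum>(e, t)\<in>{(e, t). EPt e t \<in> gtop G frontier_of \<Omega>}. ewt G e) \<le> (\<Sum>(e, t)\<in>(\<lambda>e. (e, len G e / 2)) ` cut. ewt G e)"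
      by (rule sum_mono2[OF _ sub]) (use fincut G in \<open>auto simp: cut_def closed_graph_def intro: less_imp_le\<close>)
    also have "\<dots> = cutw G S" unfolding cutw_def cut_def[symmetric]
      by (subst sum.reindex) (auto simp: inj_on_def)
    finally show ?thesis .
  qed
  have b2: "{v \<in> verts G. Vtx v \<in> gtop G frontier_of \<Omega>} = {}" using fr by auto
  have bw: "bdry_weight G \<Omega> \<le> cutw G S" unfolding bdry_weight_def b2 using b1 by simp
  have v1: "vol G \<Omega> = VS"
  proof -
    have "{v \<in> verts G. Vtx v \<in> \<Omega>} = S" using S by (auto simp: \<Omega>_def gcarrier_def phiS_def ind_def)
    then show ?thesis by (simp add: vol_def VS_def)
  qed
  have v2: "vol G (gcarrier G - \<Omega>) = (\<Sum>v\<in>verts G - S. vmeas G v)"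
  proof -
    have "{v \<in> verts G. Vtx v \<in> gcarrier G - \<Omega>} = verts G - S" using S by (auto simp: \<Omega>_def gcarrier_def phiS_def ind_def)
    then show ?thesis by (simp add: vol_def)
  qed
  have "(\<Sum>v\<in>verts G - S. vmeas G v) = (\<Sum>v\<in>verts G. vmeas G v) - VS"
    using S fin by (simp add: sum_diff VS_def)
  then have mn: "min (vol G \<Omega>) (vol G (gcarrier G - \<Omega>)) = VS" using v1 v2 half VS_def by auto
  have mem: "bdry_weight G \<Omega> * VS powr (1 / \<nu> - 1) \<in> {bdry_weight G \<Omega> * min (vol G \<Omega>) (vol G (gcarrier G - \<Omega>)) powr (1 / \<nu> - 1) | \<Omega>.
       openin (gtop G) \<Omega> \<and> finite (gtop G frontier_of \<Omega>) \<and>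
       0 < min (vol G \<Omega>) (vol G (gcarrier G - \<Omega>))}"
    using oO finfr mn pos VS_def by (metis (mono_tags, lifting) mem_Collect_eq)
  have bdd: "bdd_below {bdry_weight G \<Omega> * min (vol G \<Omega>) (vol G (gcarrier G - \<Omega>)) powr (1 / \<nu> - 1) | \<Omega>.
       openin (gtop G) \<Omega> \<and> finite (gtop G frontier_of \<Omega>) \<and>
       0 < min (vol G \<Omega>) (vol G (gcarrier G - \<Omega>))}"
    by (rule bdd_belowI[of _ 0]) (auto intro!: mult_nonneg_nonneg bdry_weight_nonneg[OF G])
  have "iso_const G \<nu> \<le> bdry_weight G \<Omega> * VS powr (1 / \<nu> - 1)"
    unfolding iso_const_def by (rule cInf_lower[OF mem bdd])
  also have "\<dots> \<le> cutw G S * VS powr (1 / \<nu> - 1)"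
    by (rule mult_right_mono[OF bw]) simp
  finally have "iso_const G \<nu> * VS powr (1 - 1/\<nu>) \<le> cutw G S * VS powr (1 / \<nu> - 1) * VS powr (1 - 1/\<nu>)"
    by (rule mult_right_mono) simp
  also have "\<dots> = cutw G S" using pos VS_def by (simp add: mult.assoc flip: powr_add)
  finally show ?thesis unfolding VS_def .
qed

lemma holder_sum:
  fixes w a b :: "'a \<Rightarrow> real"
  assumes fin: "finite A" and w: "\<And>i. i \<in> A \<Longrightarrow> 0 \<le> w i" and a: "\<And>i. i \<in> A \<Longrightarrow> 0 \<le> a i"
    and b: "\<And>i. i \<in> A \<Longrightarrow> 0 \<le> b i"
    and r: "r > 1" and s: "s > 1" and rs: "1/r + 1/s = 1"
  shows "(\<Sum>i\<in>A. w i * a i * b i) \<le> (\<Sum>i\<in>A. w i * a i powr r) powr (1/r) * (\<Sum>i\<in>A. w i * b i powr s) powr (1/s)"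
proof -
  define P where "P = (\<Sum>i\<in>A. w i * a i powr r)"
  define R where "R = (\<Sum>i\<in>A. w i * b i powr s)"
  have P0: "P \<ge> 0" unfolding P_def using w by (auto intro: sum_nonneg)
  have R0: "R \<ge> 0" unfolding R_def using w by (auto intro: sum_nonneg)
  show ?thesis
  proof (cases "P = 0 \<or> R = 0")
    case True
    then have "\<forall>i\<in>A. w i * a i * b i = 0"
    proof
      assume "P = 0"
      then have "\<forall>i\<in>A. w i * a i powr r = 0" unfolding P_def
        using sum_nonneg_eq_0_iff[OF fin] w by (simp add: sum_nonneg_eq_0_iff[OF fin])
      then show ?thesis using r by auto
    next
      assume "R = 0"
      then have "\<forall>i\<in>A. w i * b i powr s = 0" unfolding R_def
        using w by (simp add: sum_nonneg_eq_0_iff[OF fin])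
      then show ?thesis using s by auto
    qed
    then have "(\<Sum>i\<in>A. w i * a i * b i) = 0" by (intro sum.neutral) auto
    then show ?thesis using P0 R0 unfolding P_def R_def by simp
  next
    case False
    then have Pp: "P > 0" and Rp: "R > 0" using P0 R0 by auto
    define \<alpha> where "\<alpha> = P powr (1/r)"
    define \<beta> where "\<beta> = R powr (1/s)"
    have ap: "\<alpha> > 0" "\<beta> > 0" using Pp Rp by (auto simp: \<alpha>_def \<beta>_def)
    have ar: "\<alpha> powr r = P" using Pp r by (simp add: \<alpha>_def powr_powr)
    have bs: "\<beta> powr s = R" using Rp s by (simp add: \<beta>_def powr_powr)
    have "(\<Sum>i\<in>A. w i * ((a i / \<alpha>) * (b i / \<beta>))) \<le> (\<Sum>i\<in>A. w i * ((a i / \<alpha>) powr r / r + (b i / \<beta>) powr s / s))"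
    proof (intro sum_mono mult_left_mono)
      fix i assume i: "i \<in> A"
      show "a i / \<alpha> * (b i / \<beta>) \<le> (a i / \<alpha>) powr r / r + (b i / \<beta>) powr s / s"
        by (rule Youngs_inequality[OF r s rs]) (use a b ap i in auto)
      show "0 \<le> w i" using w i by auto
    qed
    also have "\<dots> = (\<Sum>i\<in>A. w i * a i powr r) / (P * r) + (\<Sum>i\<in>A. w i * b i powr s) / (R * s)"
      using a b ap by (simp add: powr_divide ar bs sum_divide_distrib sum.distrib algebra_simps)
    also have "\<dots> = 1" using Pp Rp rs unfolding P_def[symmetric] R_def[symmetric] by (simp add: field_simps)
    finally have "(\<Sum>i\<in>A. w i * a i * b i) / (\<alpha> * \<beta>) \<le> 1"
      by (simp add: sum_divide_distrib algebra_simps)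
    then show ?thesis using ap unfolding P_def[symmetric] R_def[symmetric] \<alpha>_def[symmetric] \<beta>_def[symmetric]
      by (simp add: divide_le_eq)
  qed
qed

lemma median_exists:
  fixes w x :: "'a \<Rightarrow> real"
  assumes fin: "finite A" and ne: "A \<noteq> {}" and w: "\<And>v. v \<in> A \<Longrightarrow> 0 \<le> w v"
  shows "\<exists>c. 2 * (\<Sum>v\<in>{v\<in>A. x v > c}. w v) \<le> (\<Sum>v\<in>A. w v) \<and> 2 * (\<Sum>v\<in>{v\<in>A. x v < c}. w v) \<le> (\<Sum>v\<in>A. w v)"
proof -
  define W where "W = (\<Sum>v\<in>A. w v)"
  have W0: "0 \<le> W" unfolding W_def using w by (simp add: sum_nonneg)
  define T where "T = {y \<in> x ` A. W \<le> 2 * (\<Sum>v\<in>{v\<in>A. x v \<le> y}. w v)}"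
  have finT: "finite T" using fin by (simp add: T_def)
  have "{v\<in>A. x v \<le> Max (x ` A)} = A" using fin by auto
  then have MT: "Max (x ` A) \<in> T" using fin ne W0 unfolding T_def W_def by auto
  define c where "c = Min T"
  have cT: "c \<in> T" unfolding c_def using MT finT by (auto intro: Min_in)
  have split: "W = (\<Sum>v\<in>{v\<in>A. x v > c}. w v) + (\<Sum>v\<in>{v\<in>A. x v \<le> c}. w v)"
  proof -
    have "W = (\<Sum>v\<in>{v\<in>A. x v > c} \<union> {v\<in>A. x v \<le> c}. w v)" unfolding W_def
      by (rule sum.cong) auto
    also have "\<dots> = (\<Sum>v\<in>{v\<in>A. x v > c}. w v) + (\<Sum>v\<in>{v\<in>A. x v \<le> c}. w v)"
      by (rule sum.union_disjoint) (use fin in auto)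
    finally show ?thesis .
  qed
  have 1: "2 * (\<Sum>v\<in>{v\<in>A. x v > c}. w v) \<le> W" using cT split unfolding T_def by auto
  have 2: "2 * (\<Sum>v\<in>{v\<in>A. x v < c}. w v) \<le> W"
  proof (rule ccontr)
    assume a: "\<not> ?thesis"
    define L where "L = {v\<in>A. x v < c}"
    have "L \<noteq> {}"
    proof
      assume "L = {}"
      then have e: "{v\<in>A. x v < c} = {}" by (simp add: L_def)
      have "2 * (\<Sum>v\<in>{v\<in>A. x v < c}. w v) = 0" by (simp only: e sum.empty mult_zero_right)
      with a W0 show False by linarith
    qed
    moreover have finL: "finite L" using fin by (simp add: L_def)
    ultimately have yin: "Max (x ` L) \<in> x ` L" by (auto intro: Max_in)
    define y where "y = Max (x ` L)"
    have yc: "y < c" using yin unfolding y_def L_def by auto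
    have "{v\<in>A. x v \<le> y} = L" unfolding L_def using yc finL
      by (auto simp: y_def L_def intro!: Max_ge)
    then have "y \<in> T" using a yin unfolding T_def y_def L_def by auto
    then have "c \<le> y" unfolding c_def using finT by (auto intro: Min_le)
    then show False using yc by simp
  qed
  show ?thesis using 1 2 unfolding W_def by blast
qed

lemma aux_cmp: "(0::real) \<le> c \<Longrightarrow> X \<le> Y \<Longrightarrow> c * X - c * Y \<le> 0"
  using mult_left_mono[of X Y c] by linarith

lemma median_l1:
  fixes w x :: "'a \<Rightarrow> real"
  assumes fin: "finite A" and w: "\<And>v. v \<in> A \<Longrightarrow> 0 \<le> w v"
    and m1: "2 * (\<Sum>v\<in>{v\<in>A. x v > c}. w v) \<le> (\<Sum>v\<in>A. w v)"
    and m2: "2 * (\<Sum>v\<in>{v\<in>A. x v < c}. w v) \<le> (\<Sum>v\<in>A. w v)"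
  shows "(\<Sum>v\<in>A. w v * \<bar>x v - c\<bar>) \<le> (\<Sum>v\<in>A. w v * \<bar>x v\<bar>)"
proof (cases "c \<ge> 0")
  case True
  have "(\<Sum>v\<in>A. w v * \<bar>x v - c\<bar>) - (\<Sum>v\<in>A. w v * \<bar>x v\<bar>) = (\<Sum>v\<in>A. w v * (\<bar>x v - c\<bar> - \<bar>x v\<bar>))"
    by (simp add: sum_subtractf algebra_simps)
  also have "\<dots> \<le> (\<Sum>v\<in>A. w v * (if x v < c then c else - c))"
    using w True by (intro sum_mono mult_left_mono) auto
  also have "\<dots> = c * (\<Sum>v\<in>{v\<in>A. x v < c}. w v) - c * (\<Sum>v\<in>{v\<in>A. \<not> x v < c}. w v)"
  proof -
    have "(\<Sum>v\<in>A. w v * (if x v < c then c else - c)) = (\<Sum>v\<in>{v\<in>A. x v < c}. w v * c) + (\<Sum>v\<in>{v\<in>A. \<not> x v < c}. w v * (- c))"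
    proof -
      have "(\<Sum>v\<in>A. w v * (if x v < c then c else - c)) = (\<Sum>v\<in>A. if x v < c then w v * c else w v * (- c))"
        by (rule sum.cong) auto
      also have "\<dots> = (\<Sum>v\<in>A \<inter> {v. x v < c}. w v * c) + (\<Sum>v\<in>A \<inter> - {v. x v < c}. w v * (- c))"
        by (rule sum.If_cases[OF fin])
      also have "\<dots> = (\<Sum>v\<in>{v\<in>A. x v < c}. w v * c) + (\<Sum>v\<in>{v\<in>A. \<not> x v < c}. w v * (- c))"
        by (intro arg_cong2[where f="(+)"] sum.cong) auto
      finally show ?thesis .
    qed
    then show ?thesis by (simp only: sum_distrib_right[symmetric]) (simp add: algebra_simps)
  qed
  also have "\<dots> \<le> 0"
  proof -
    have "(\<Sum>v\<in>A. w v) = (\<Sum>v\<in>{v\<in>A. x v < c}. w v) + (\<Sum>v\<in>{v\<in>A. \<not> x v < c}. w v)"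
      using fin by (subst sum.union_disjoint[symmetric]) (auto intro: sum.cong)
    then have "(\<Sum>v\<in>{v\<in>A. x v < c}. w v) \<le> (\<Sum>v\<in>{v\<in>A. \<not> x v < c}. w v)" using m2 by simp
    then show ?thesis using True by (rule aux_cmp[rotated])
  qed
  finally show ?thesis by simp
next
  case False
  have "(\<Sum>v\<in>A. w v * \<bar>x v - c\<bar>) - (\<Sum>v\<in>A. w v * \<bar>x v\<bar>) = (\<Sum>v\<in>A. w v * (\<bar>x v - c\<bar> - \<bar>x v\<bar>))"
    by (simp add: sum_subtractf algebra_simps)
  also have "\<dots> \<le> (\<Sum>v\<in>A. w v * (if x v > c then - c else c))"
    using w False by (intro sum_mono mult_left_mono) auto
  also have "\<dots> = (- c) * (\<Sum>v\<in>{v\<in>A. x v > c}. w v) - (- c) * (\<Sum>v\<in>{v\<in>A. \<not> x v > c}. w v)"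
  proof -
    have "(\<Sum>v\<in>A. w v * (if x v > c then - c else c)) = (\<Sum>v\<in>{v\<in>A. x v > c}. w v * (- c)) + (\<Sum>v\<in>{v\<in>A. \<not> x v > c}. w v * c)"
    proof -
      have "(\<Sum>v\<in>A. w v * (if x v > c then - c else c)) = (\<Sum>v\<in>A. if x v > c then w v * (- c) else w v * c)"
        by (rule sum.cong) auto
      also have "\<dots> = (\<Sum>v\<in>A \<inter> {v. x v > c}. w v * (- c)) + (\<Sum>v\<in>A \<inter> - {v. x v > c}. w v * c)"
        by (rule sum.If_cases[OF fin])
      also have "\<dots> = (\<Sum>v\<in>{v\<in>A. x v > c}. w v * (- c)) + (\<Sum>v\<in>{v\<in>A. \<not> x v > c}. w v * c)"
        by (intro arg_cong2[where f="(+)"] sum.cong) auto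
      finally show ?thesis .
    qed
    then show ?thesis by (simp only: sum_distrib_right[symmetric]) (simp add: algebra_simps)
  qed
  also have "\<dots> \<le> 0"
  proof -
    have "(\<Sum>v\<in>A. w v) = (\<Sum>v\<in>{v\<in>A. x v > c}. w v) + (\<Sum>v\<in>{v\<in>A. \<not> x v > c}. w v)"
      using fin by (subst sum.union_disjoint[symmetric]) (auto intro: sum.cong)
    then have "(\<Sum>v\<in>{v\<in>A. x v > c}. w v) \<le> (\<Sum>v\<in>{v\<in>A. \<not> x v > c}. w v)" using m1 by simp
    moreover have "0 \<le> - c" using False by simp
    ultimately show ?thesis by (rule aux_cmp[rotated])
  qed
  finally show ?thesis by simp
qed

lemma pm_pointwise:
  fixes a b :: real
  shows "\<bar>(max a 0)\<^sup>2 - (max b 0)\<^sup>2\<bar> + \<bar>(max (-a) 0)\<^sup>2 - (max (-b) 0)\<^sup>2\<bar> \<le> \<bar>a - b\<bar> * (\<bar>a\<bar> + \<bar>b\<bar>)"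
proof -
  have sq: "\<bar>p\<^sup>2 - q\<^sup>2\<bar> = \<bar>p - q\<bar> * \<bar>p + q\<bar>" for p q :: real
  proof -
    have "p\<^sup>2 - q\<^sup>2 = (p - q) * (p + q)" by (simp add: power2_eq_square algebra_simps)
    then show ?thesis by (simp add: abs_mult)
  qed
  consider "a \<ge> 0" "b \<ge> 0" | "a \<ge> 0" "b < 0" | "a < 0" "b \<ge> 0" | "a < 0" "b < 0" by linarith
  then show ?thesis
  proof cases
    case 1 then show ?thesis using sq[of a b] by (simp add: max_def)
  next
    case 2 then show ?thesis using mult_nonneg_nonpos[of a b] by (simp add: max_def power2_eq_square algebra_simps abs_if)
  next
    case 3 then show ?thesis using mult_nonpos_nonneg[of a b] by (simp add: max_def power2_eq_square algebra_simps abs_if)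
  next
    case 4 then show ?thesis using sq[of "-a" "-b"] by (simp add: max_def abs_minus_commute add.commute)
  qed
qed

definition EE :: "('v, 'e) cgraph \<Rightarrow> ('v \<Rightarrow> real) \<Rightarrow> real" where
  "EE G H = (\<Sum>e\<in>edges G. ewt G e * \<bar>H (src G e) - H (tgt G e)\<bar>)"

lemma EE_nonneg: "closed_graph G \<Longrightarrow> 0 \<le> EE G H"
  unfolding EE_def closed_graph_def by (auto intro!: sum_nonneg)

lemma coarea_ind:
  assumes G: "closed_graph G" and nu: "\<nu> > 1" and Kp: "iso_const G \<nu> > 0"
    and psi: "\<And>v. v \<in> verts G \<Longrightarrow> 0 \<le> \<psi> v"
  shows "\<forall>H. card {v\<in>verts G. H v > 0} = n \<longrightarrow> (\<forall>v. 0 \<le> H v) \<longrightarrow>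
     2 * (\<Sum>v\<in>{v\<in>verts G. H v > 0}. vmeas G v) \<le> (\<Sum>v\<in>verts G. vmeas G v) \<longrightarrow>
     iso_const G \<nu> * (\<Sum>v\<in>verts G. vmeas G v * H v * \<psi> v)
       \<le> (\<Sum>v\<in>verts G. vmeas G v * \<psi> v powr \<nu>) powr (1/\<nu>) * EE G H"
proof (induction n rule: less_induct)
  case (less n)
  define K where "K = iso_const G \<nu>"
  define N where "N = (\<Sum>v\<in>verts G. vmeas G v * \<psi> v powr \<nu>) powr (1/\<nu>)"
  have N0: "0 \<le> N" unfolding N_def by simp
  have fin: "finite (verts G)" "finite (edges G)" using G by (auto simp: closed_graph_def)
  have Vp: "\<And>v. v \<in> verts G \<Longrightarrow> 0 < vmeas G v" using G by (auto simp: closed_graph_def)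
  have ends: "\<And>e. e \<in> edges G \<Longrightarrow> src G e \<in> verts G \<and> tgt G e \<in> verts G"
    using G by (auto simp: closed_graph_def)
  show ?case
  proof (intro allI impI)
    fix H :: "'a \<Rightarrow> real"
    assume cn: "card {v\<in>verts G. H v > 0} = n" and H0: "\<forall>v. 0 \<le> H v"
      and half: "2 * (\<Sum>v\<in>{v\<in>verts G. H v > 0}. vmeas G v) \<le> (\<Sum>v\<in>verts G. vmeas G v)"
    define S where "S = {v\<in>verts G. H v > 0}"
    have finS: "finite S" using fin by (simp add: S_def)
    have SV: "S \<subseteq> verts G" by (auto simp: S_def)
    have main: "K * (\<Sum>v\<in>verts G. vmeas G v * H v * \<psi> v) \<le> N * EE G H"
    proof (cases "S = {}")
      case True
      then have "\<forall>v\<in>verts G. H v = 0" using H0 unfolding S_def by (metis (mono_tags) empty_Collect_eq order_less_le)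
      then have "(\<Sum>v\<in>verts G. vmeas G v * H v * \<psi> v) = 0" by simp
      then show ?thesis using N0 EE_nonneg[OF G] by simp
    next
      case False
      define x where "x = Min (H ` S)"
      have xin: "x \<in> H ` S" unfolding x_def using False finS by (auto intro: Min_in)
      then obtain v0 where v0: "v0 \<in> S" "H v0 = x" by auto
      have xpos: "x > 0" using v0 by (auto simp: S_def)
      have xle: "\<And>v. v \<in> S \<Longrightarrow> x \<le> H v" unfolding x_def using finS by auto
      define H' where "H' v = (if v \<in> S then H v - x else H v)" for v
      have H'0: "\<forall>v. 0 \<le> H' v" using H0 xle by (auto simp: H'_def)
      have S'sub: "{v\<in>verts G. H' v > 0} \<subseteq> S - {v0}"
        using v0 by (auto simp: H'_def S_def)
      have cless: "card {v\<in>verts G. H' v > 0} < n"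
      proof -
        have "{v\<in>verts G. H' v > 0} \<subset> S" using S'sub v0 by blast
        then show ?thesis using psubset_card_mono[OF finS] cn S_def by auto
      qed
      have half': "2 * (\<Sum>v\<in>{v\<in>verts G. H' v > 0}. vmeas G v) \<le> (\<Sum>v\<in>verts G. vmeas G v)"
      proof -
        have "(\<Sum>v\<in>{v\<in>verts G. H' v > 0}. vmeas G v) \<le> (\<Sum>v\<in>S. vmeas G v)"
          by (rule sum_mono2[OF finS]) (use S'sub SV Vp in \<open>auto intro: less_imp_le\<close>)
        then show ?thesis using half S_def by simp
      qed
      have IH: "K * (\<Sum>v\<in>verts G. vmeas G v * H' v * \<psi> v) \<le> N * EE G H'"
        using less.IH[OF cless] cless H'0 half' unfolding K_def N_def by blast
      have sumeq: "(\<Sum>v\<in>verts G. vmeas G v * H v * \<psi> v) = (\<Sum>v\<in>verts G. vmeas G v * H' v * \<psi> v) + x * (\<Sum>v\<in>S. vmeas G v * \<psi> v)"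
      proof -
        have "(\<Sum>v\<in>verts G. vmeas G v * H v * \<psi> v) = (\<Sum>v\<in>verts G. vmeas G v * H' v * \<psi> v + (if v \<in> S then x * (vmeas G v * \<psi> v) else 0))"
          by (rule sum.cong) (auto simp: H'_def algebra_simps)
        also have "\<dots> = (\<Sum>v\<in>verts G. vmeas G v * H' v * \<psi> v) + (\<Sum>v\<in>verts G. (if v \<in> S then x * (vmeas G v * \<psi> v) else 0))"
          by (rule sum.distrib)
        also have "(\<Sum>v\<in>verts G. (if v \<in> S then x * (vmeas G v * \<psi> v) else 0)) = (\<Sum>v\<in>verts G \<inter> S. x * (vmeas G v * \<psi> v))"
          by (rule sum.inter_restrict[OF fin(1), symmetric])
        also have "verts G \<inter> S = S" using SV by blast
        finally show ?thesis by (simp add: sum_distrib_left)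
      qed
      have edgeeq: "EE G H = EE G H' + x * cutw G S"
      proof -
        have "EE G H = (\<Sum>e\<in>edges G. ewt G e * \<bar>H' (src G e) - H' (tgt G e)\<bar> + (if (src G e \<in> S) \<noteq> (tgt G e \<in> S) then x * ewt G e else 0))"
          unfolding EE_def
        proof (rule sum.cong[OF refl])
          fix e assume e: "e \<in> edges G"
          have sv: "src G e \<in> verts G" "tgt G e \<in> verts G" using ends[OF e] by auto
          have nz: "\<And>v. v \<in> verts G \<Longrightarrow> v \<notin> S \<Longrightarrow> H v = 0" using H0 unfolding S_def
            by (metis (mono_tags, lifting) mem_Collect_eq order_less_le)
          show "ewt G e * \<bar>H (src G e) - H (tgt G e)\<bar> = ewt G e * \<bar>H' (src G e) - H' (tgt G e)\<bar> + (if (src G e \<in> S) \<noteq> (tgt G e \<in> S) then x * ewt G e else 0)"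
          proof (cases "src G e \<in> S"; cases "tgt G e \<in> S")
            assume "src G e \<in> S" "tgt G e \<in> S" then show ?thesis by (simp add: H'_def)
          next
            assume a: "src G e \<in> S" "tgt G e \<notin> S"
            then have "H (tgt G e) = 0" "H' (tgt G e) = 0" using nz sv by (auto simp: H'_def)
            moreover have "x \<le> H (src G e)" using xle a by auto
            ultimately show ?thesis using a H0 xpos by (simp add: H'_def algebra_simps)
          next
            assume a: "src G e \<notin> S" "tgt G e \<in> S"
            then have "H (src G e) = 0" "H' (src G e) = 0" using nz sv by (auto simp: H'_def)
            moreover have "x \<le> H (tgt G e)" using xle a by auto
            ultimately show ?thesis using a H0 xpos by (simp add: H'_def algebra_simps)
          next
            assume "src G e \<notin> S" "tgt G e \<notin> S" then show ?thesis by (simp add: H'_def)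
          qed
        qed
        also have "\<dots> = EE G H' + (\<Sum>e\<in>edges G. if (src G e \<in> S) \<noteq> (tgt G e \<in> S) then x * ewt G e else 0)"
          unfolding EE_def by (rule sum.distrib)
        also have "(\<Sum>e\<in>edges G. if (src G e \<in> S) \<noteq> (tgt G e \<in> S) then x * ewt G e else 0) = x * cutw G S"
          unfolding cutw_def sum_distrib_left by (rule sum.inter_filter[OF fin(2), symmetric])
        finally show ?thesis .
      qed
      have VSpos: "0 < (\<Sum>v\<in>S. vmeas G v)"
        using False finS SV Vp by (intro sum_pos) auto
      have iso: "K * (\<Sum>v\<in>S. vmeas G v) powr (1 - 1/\<nu>) \<le> cutw G S"
        unfolding K_def by (rule iso_bound[OF G SV VSpos]) (use half S_def in simp)
      have hold: "(\<Sum>v\<in>S. vmeas G v * \<psi> v) \<le> (\<Sum>v\<in>S. vmeas G v) powr (1 - 1/\<nu>) * N"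
      proof -
        have r: "\<nu>/(\<nu>-1) > 1" "1/(\<nu>/(\<nu>-1)) + 1/\<nu> = 1" using nu by (auto simp: field_simps)
        have hh: "(\<Sum>v\<in>S. vmeas G v * 1 * \<psi> v) \<le> (\<Sum>v\<in>S. vmeas G v * 1 powr (\<nu>/(\<nu>-1))) powr (1/(\<nu>/(\<nu>-1))) * (\<Sum>v\<in>S. vmeas G v * \<psi> v powr \<nu>) powr (1/\<nu>)"
          by (rule holder_sum[OF finS _ _ _ r(1) nu r(2)]) (use SV Vp psi in \<open>auto intro: less_imp_le\<close>)
        have e1: "1/(\<nu>/(\<nu>-1)) = 1 - 1/\<nu>" using nu by (auto simp: field_simps)
        have h1: "(\<Sum>v\<in>S. vmeas G v * \<psi> v) \<le> (\<Sum>v\<in>S. vmeas G v) powr (1 - 1/\<nu>) * (\<Sum>v\<in>S. vmeas G v * \<psi> v powr \<nu>) powr (1/\<nu>)"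
          using hh unfolding e1 by simp
        have h2: "(\<Sum>v\<in>S. vmeas G v * \<psi> v powr \<nu>) powr (1/\<nu>) \<le> N"
          unfolding N_def
          by (intro powr_mono2 sum_mono2 fin sum_nonneg mult_nonneg_nonneg) (use SV Vp nu in \<open>auto intro: less_imp_le\<close>)
        have "(\<Sum>v\<in>S. vmeas G v) powr (1 - 1/\<nu>) * (\<Sum>v\<in>S. vmeas G v * \<psi> v powr \<nu>) powr (1/\<nu>) \<le> (\<Sum>v\<in>S. vmeas G v) powr (1 - 1/\<nu>) * N"
          by (rule mult_left_mono[OF h2]) simp
        then show ?thesis using h1 by linarith
      qed
      have Kp': "K > 0" using Kp by (simp add: K_def)
      have "K * (\<Sum>v\<in>verts G. vmeas G v * H v * \<psi> v) = K * (\<Sum>v\<in>verts G. vmeas G v * H' v * \<psi> v) + x * (K * (\<Sum>v\<in>S. vmeas G v * \<psi> v))"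
        by (simp only: sumeq) (simp add: algebra_simps)
      also have "\<dots> \<le> N * EE G H' + x * (K * ((\<Sum>v\<in>S. vmeas G v) powr (1 - 1/\<nu>) * N))"
        using IH hold Kp' xpos by (intro add_mono mult_left_mono) auto
      also have "\<dots> \<le> N * EE G H' + x * (cutw G S * N)"
        using iso N0 xpos by (intro add_mono mult_left_mono) (auto simp: mult.assoc[symmetric] intro: mult_right_mono)
      also have "\<dots> = N * EE G H" by (simp add: edgeeq algebra_simps)
      finally show ?thesis .
    qed
    then show "iso_const G \<nu> * (\<Sum>v\<in>verts G. vmeas G v * H v * \<psi> v)
       \<le> (\<Sum>v\<in>verts G. vmeas G v * \<psi> v powr \<nu>) powr (1/\<nu>) * EE G H"
      unfolding K_def N_def .
  qed
qed

lemma double_count: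
  fixes c :: "'e \<Rightarrow> real" and F :: "'v \<Rightarrow> real"
  assumes finV: "finite Vs" and finE: "finite E"
    and ends: "\<And>e. e \<in> E \<Longrightarrow> s e \<in> Vs \<and> t e \<in> Vs \<and> s e \<noteq> t e"
  shows "(\<Sum>e\<in>E. c e * (F (s e) + F (t e))) = (\<Sum>v\<in>Vs. F v * (\<Sum>e\<in>{e\<in>E. s e = v \<or> t e = v}. c e))"
proof -
  have "(\<Sum>v\<in>Vs. F v * (\<Sum>e\<in>{e\<in>E. s e = v \<or> t e = v}. c e))
      = (\<Sum>v\<in>Vs. \<Sum>e\<in>E. if s e = v \<or> t e = v then F v * c e else 0)"
    by (auto simp: sum_distrib_left sum.inter_filter[OF finE] intro!: sum.cong)
  also have "\<dots> = (\<Sum>e\<in>E. \<Sum>v\<in>Vs. if s e = v \<or> t e = v then F v * c e else 0)"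
    by (rule sum.swap)
  also have "\<dots> = (\<Sum>e\<in>E. c e * (F (s e) + F (t e)))"
  proof (rule sum.cong[OF refl])
    fix e assume e: "e \<in> E"
    have "(\<Sum>v\<in>Vs. if s e = v \<or> t e = v then F v * c e else 0) = (\<Sum>v\<in>Vs \<inter> {s e, t e}. F v * c e)"
      by (subst sum.inter_restrict[OF finV]) (auto intro!: sum.cong)
    also have "Vs \<inter> {s e, t e} = {s e, t e}" using ends[OF e] by auto
    also have "(\<Sum>v\<in>{s e, t e}. F v * c e) = F (s e) * c e + F (t e) * c e" using ends[OF e] by simp
    finally show "(\<Sum>v\<in>Vs. if s e = v \<or> t e = v then F v * c e else 0) = c e * (F (s e) + F (t e))"
      by (simp add: algebra_simps)
  qed
  finally show ?thesis by simp
qed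

lemma cs_bound:
  fixes h :: "'v \<Rightarrow> real"
  assumes G: "closed_graph G" and ne: "verts G \<noteq> {}"
  shows "(\<Sum>e\<in>edges G. ewt G e * \<bar>h (src G e) - h (tgt G e)\<bar> * (\<bar>h (src G e)\<bar> + \<bar>h (tgt G e)\<bar>))
      \<le> 2 * sqrt (rho_sup G) * sqrt (\<Sum>e\<in>edges G. ewt G e * ((h (tgt G e) - h (src G e))\<^sup>2 / len G e))
           * sqrt (\<Sum>v\<in>verts G. vmeas G v * (h v)\<^sup>2)"
    and "0 \<le> rho_sup G"
proof -
  have finV: "finite (verts G)" and finE: "finite (edges G)" using G by (auto simp: closed_graph_def)
  have ends: "\<And>e. e \<in> edges G \<Longrightarrow> src G e \<in> verts G \<and> tgt G e \<in> verts G \<and> 0 < len G e \<and> 0 < ewt G e"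
    and Vp: "\<And>v. v \<in> verts G \<Longrightarrow> 0 < vmeas G v" using G by (auto simp: closed_graph_def)
  define \<rho> where "\<rho> = rho_sup G"
  define inc where "inc v = (\<Sum>e\<in>{e \<in> edges G. src G e = v \<or> tgt G e = v}. ewt G e * len G e / 2)" for v
  have incle: "inc v \<le> \<rho> * vmeas G v" if v: "v \<in> verts G" for v
  proof -
    have "inc v / vmeas G v \<le> \<rho>" unfolding \<rho>_def rho_sup_def inc_def
      using finV v by (intro Max_ge) auto
    then show ?thesis using Vp[OF v] by (simp add: divide_le_eq)
  qed
  have inc0: "0 \<le> inc v" for v unfolding inc_def
  proof (rule sum_nonneg)
    fix e assume "e \<in> {e \<in> edges G. src G e = v \<or> tgt G e = v}"
    then have "0 < ewt G e" "0 < len G e" using ends by auto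
    then show "0 \<le> ewt G e * len G e / 2" by simp
  qed
  obtain v0 where "v0 \<in> verts G" using ne by auto
  then have "0 \<le> \<rho> * vmeas G v0" "0 < vmeas G v0" using incle inc0 order_trans Vp by blast+
  then show rho0: "0 \<le> rho_sup G" unfolding \<rho>_def by (auto simp: zero_le_mult_iff)
  define E' where "E' = {e \<in> edges G. src G e \<noteq> tgt G e}"
  have finE': "finite E'" using finE by (simp add: E'_def)
  define A where "A e = sqrt (ewt G e / len G e) * \<bar>h (tgt G e) - h (src G e)\<bar>" for e
  define B where "B e = sqrt (ewt G e * len G e) * (\<bar>h (src G e)\<bar> + \<bar>h (tgt G e)\<bar>)" for e
  define Q where "Q = (\<Sum>e\<in>edges G. ewt G e * ((h (tgt G e) - h (src G e))\<^sup>2 / len G e))"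
  define N2 where "N2 = (\<Sum>v\<in>verts G. vmeas G v * (h v)\<^sup>2)"
  have AB: "A e * B e = ewt G e * \<bar>h (src G e) - h (tgt G e)\<bar> * (\<bar>h (src G e)\<bar> + \<bar>h (tgt G e)\<bar>)"
    if e: "e \<in> edges G" for e
  proof -
    have "sqrt (ewt G e / len G e) * sqrt (ewt G e * len G e) = ewt G e"
      using ends[OF e] by (simp add: real_sqrt_mult[symmetric] power2_eq_square[symmetric])
    moreover have "A e * B e = (sqrt (ewt G e / len G e) * sqrt (ewt G e * len G e)) * (\<bar>h (tgt G e) - h (src G e)\<bar> * (\<bar>h (src G e)\<bar> + \<bar>h (tgt G e)\<bar>))"
      unfolding A_def B_def by (simp only: mult_ac)
    ultimately show ?thesis by (simp add: abs_minus_commute mult.assoc)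
  qed
  have "(\<Sum>e\<in>edges G. ewt G e * \<bar>h (src G e) - h (tgt G e)\<bar> * (\<bar>h (src G e)\<bar> + \<bar>h (tgt G e)\<bar>))
      = (\<Sum>e\<in>E'. ewt G e * \<bar>h (src G e) - h (tgt G e)\<bar> * (\<bar>h (src G e)\<bar> + \<bar>h (tgt G e)\<bar>))"
    by (rule sum.mono_neutral_right[OF finE]) (auto simp: E'_def)
  also have "\<dots> = (\<Sum>e\<in>E'. A e * B e)" by (rule sum.cong) (auto simp: AB E'_def)
  finally have Zeq: "(\<Sum>e\<in>edges G. ewt G e * \<bar>h (src G e) - h (tgt G e)\<bar> * (\<bar>h (src G e)\<bar> + \<bar>h (tgt G e)\<bar>)) = (\<Sum>e\<in>E'. A e * B e)" .
  have CS: "(\<Sum>e\<in>E'. A e * B e)\<^sup>2 \<le> (\<Sum>e\<in>E'. (A e)\<^sup>2) * (\<Sum>e\<in>E'. (B e)\<^sup>2)"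
    by (rule Cauchy_Schwarz_ineq_sum)
  have SA: "(\<Sum>e\<in>E'. (A e)\<^sup>2) \<le> Q"
  proof -
    have "(\<Sum>e\<in>E'. (A e)\<^sup>2) = (\<Sum>e\<in>E'. ewt G e * ((h (tgt G e) - h (src G e))\<^sup>2 / len G e))"
    proof (rule sum.cong[OF refl])
      fix e assume "e \<in> E'"
      then have "0 < ewt G e" "0 < len G e" using ends by (auto simp: E'_def)
      then have "(sqrt (ewt G e / len G e))\<^sup>2 = ewt G e / len G e" by simp
      then show "(A e)\<^sup>2 = ewt G e * ((h (tgt G e) - h (src G e))\<^sup>2 / len G e)"
        by (simp add: A_def power_mult_distrib)
    qed
    also have "\<dots> \<le> Q" unfolding Q_def
    proof (rule sum_mono2[OF finE])
      show "E' \<subseteq> edges G" by (auto simp: E'_def)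
      fix e assume "e \<in> edges G - E'"
      then have "0 < ewt G e" "0 < len G e" using ends by auto
      then show "0 \<le> ewt G e * ((h (tgt G e) - h (src G e))\<^sup>2 / len G e)" by simp
    qed
    finally show ?thesis .
  qed
  have SB: "(\<Sum>e\<in>E'. (B e)\<^sup>2) \<le> 4 * \<rho> * N2"
  proof -
    have "(\<Sum>e\<in>E'. (B e)\<^sup>2) \<le> (\<Sum>e\<in>E'. (2 * ewt G e * len G e) * ((h (src G e))\<^sup>2 + (h (tgt G e))\<^sup>2))"
    proof (rule sum_mono)
      fix e assume e: "e \<in> E'"
      then have p: "0 \<le> ewt G e * len G e" using ends by (auto simp: E'_def intro: less_imp_le)
      have "(\<bar>h (src G e)\<bar> + \<bar>h (tgt G e)\<bar>)\<^sup>2 \<le> 2 * ((h (src G e))\<^sup>2 + (h (tgt G e))\<^sup>2)"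
        using zero_le_power2[of "\<bar>h (src G e)\<bar> - \<bar>h (tgt G e)\<bar>"] by (simp add: power2_eq_square algebra_simps)
      then have "(ewt G e * len G e) * (\<bar>h (src G e)\<bar> + \<bar>h (tgt G e)\<bar>)\<^sup>2 \<le> (ewt G e * len G e) * (2 * ((h (src G e))\<^sup>2 + (h (tgt G e))\<^sup>2))"
        by (rule mult_left_mono[OF _ p])
      moreover have "(B e)\<^sup>2 = (ewt G e * len G e) * (\<bar>h (src G e)\<bar> + \<bar>h (tgt G e)\<bar>)\<^sup>2"
        unfolding B_def using p by (simp add: power_mult_distrib)
      moreover have "(ewt G e * len G e) * (2 * ((h (src G e))\<^sup>2 + (h (tgt G e))\<^sup>2)) = (2 * ewt G e * len G e) * ((h (src G e))\<^sup>2 + (h (tgt G e))\<^sup>2)"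
        by (simp only: mult_ac)
      ultimately show "(B e)\<^sup>2 \<le> (2 * ewt G e * len G e) * ((h (src G e))\<^sup>2 + (h (tgt G e))\<^sup>2)" by metis
    qed
    also have "\<dots> = (\<Sum>v\<in>verts G. (h v)\<^sup>2 * (\<Sum>e\<in>{e\<in>E'. src G e = v \<or> tgt G e = v}. 2 * ewt G e * len G e))"
      by (rule double_count[OF finV finE']) (use ends in \<open>auto simp: E'_def\<close>)
    also have "\<dots> \<le> (\<Sum>v\<in>verts G. (h v)\<^sup>2 * (4 * (\<rho> * vmeas G v)))"
    proof (rule sum_mono, rule mult_left_mono)
      fix v assume v: "v \<in> verts G"
      have "(\<Sum>e\<in>{e\<in>E'. src G e = v \<or> tgt G e = v}. 2 * ewt G e * len G e)
          \<le> (\<Sum>e\<in>{e\<in>edges G. src G e = v \<or> tgt G e = v}. 2 * ewt G e * len G e)"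
      proof (rule sum_mono2)
        show "finite {e\<in>edges G. src G e = v \<or> tgt G e = v}" using finE by simp
        show "{e\<in>E'. src G e = v \<or> tgt G e = v} \<subseteq> {e\<in>edges G. src G e = v \<or> tgt G e = v}" by (auto simp: E'_def)
        fix e assume "e \<in> {e\<in>edges G. src G e = v \<or> tgt G e = v} - {e\<in>E'. src G e = v \<or> tgt G e = v}"
        then have "0 < ewt G e" "0 < len G e" using ends by auto
        then show "0 \<le> 2 * ewt G e * len G e" by simp
      qed
      also have "\<dots> = 4 * inc v" unfolding inc_def by (simp add: sum_distrib_left mult.assoc)
      also have "\<dots> \<le> 4 * (\<rho> * vmeas G v)" using incle[OF v] by simp
      finally show "(\<Sum>e\<in>{e\<in>E'. src G e = v \<or> tgt G e = v}. 2 * ewt G e * len G e) \<le> 4 * (\<rho> * vmeas G v)" .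
    qed simp
    also have "\<dots> = 4 * \<rho> * N2" unfolding N2_def by (simp add: sum_distrib_left algebra_simps)
    finally show ?thesis .
  qed
  have Q0: "0 \<le> Q" unfolding Q_def
  proof (rule sum_nonneg)
    fix e assume "e \<in> edges G"
    then have "0 < ewt G e" "0 < len G e" using ends by auto
    then show "0 \<le> ewt G e * ((h (tgt G e) - h (src G e))\<^sup>2 / len G e)" by simp
  qed
  have N20: "0 \<le> N2" unfolding N2_def
  proof (rule sum_nonneg)
    fix v assume "v \<in> verts G"
    then have "0 < vmeas G v" using Vp by auto
    then show "0 \<le> vmeas G v * (h v)\<^sup>2" by simp
  qed
  have "(\<Sum>e\<in>E'. A e * B e)\<^sup>2 \<le> Q * (4 * \<rho> * N2)"
    using CS SA SB Q0 by (meson mult_mono order_trans sum_nonneg zero_le_power2)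
  then have "(\<Sum>e\<in>E'. A e * B e) \<le> sqrt (Q * (4 * \<rho> * N2))" by (rule real_le_rsqrt)
  also have "\<dots> = 2 * sqrt \<rho> * sqrt Q * sqrt N2" by (simp add: real_sqrt_mult)
  finally show "(\<Sum>e\<in>edges G. ewt G e * \<bar>h (src G e) - h (tgt G e)\<bar> * (\<bar>h (src G e)\<bar> + \<bar>h (tgt G e)\<bar>))
      \<le> 2 * sqrt (rho_sup G) * sqrt (\<Sum>e\<in>edges G. ewt G e * ((h (tgt G e) - h (src G e))\<^sup>2 / len G e))
           * sqrt (\<Sum>v\<in>verts G. vmeas G v * (h v)\<^sup>2)"
    unfolding Zeq \<rho>_def Q_def N2_def .
qed

lemma holder2:
  fixes w h :: "'a \<Rightarrow> real"
  assumes fin: "finite A" and w: "\<And>i. i \<in> A \<Longrightarrow> 0 \<le> w i" and nu: "\<nu> > 0"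
  shows "(\<Sum>i\<in>A. w i * (h i)\<^sup>2) \<le> (\<Sum>i\<in>A. w i * \<bar>h i\<bar> powr (2 + 1/\<nu>)) powr (\<nu>/(\<nu>+1)) * (\<Sum>i\<in>A. w i * \<bar>h i\<bar>) powr (1/(\<nu>+1))"
proof -
  define r where "r = (\<nu>+1)/\<nu>"
  define s where "s = \<nu>+1"
  have r: "r > 1" "s > 1" "1/r + 1/s = 1" using nu by (auto simp: r_def s_def field_simps)
  have "(\<Sum>i\<in>A. w i * (\<bar>h i\<bar> powr ((2*\<nu>+1)/(\<nu>+1))) * (\<bar>h i\<bar> powr (1/(\<nu>+1))))
     \<le> (\<Sum>i\<in>A. w i * (\<bar>h i\<bar> powr ((2*\<nu>+1)/(\<nu>+1))) powr r) powr (1/r) * (\<Sum>i\<in>A. w i * (\<bar>h i\<bar> powr (1/(\<nu>+1))) powr s) powr (1/s)"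
    by (rule holder_sum[OF fin w _ _ r]) auto
  moreover have "(\<Sum>i\<in>A. w i * (\<bar>h i\<bar> powr ((2*\<nu>+1)/(\<nu>+1))) * (\<bar>h i\<bar> powr (1/(\<nu>+1)))) = (\<Sum>i\<in>A. w i * (h i)\<^sup>2)"
  proof (rule sum.cong[OF refl])
    fix i
    have "(2*\<nu>+1)/(\<nu>+1) + 1/(\<nu>+1) = 2" using nu by (simp add: field_simps)
    then have "\<bar>h i\<bar> powr ((2*\<nu>+1)/(\<nu>+1)) * \<bar>h i\<bar> powr (1/(\<nu>+1)) = \<bar>h i\<bar> powr 2"
      by (metis powr_add)
    then show "w i * \<bar>h i\<bar> powr ((2*\<nu>+1)/(\<nu>+1)) * \<bar>h i\<bar> powr (1/(\<nu>+1)) = w i * (h i)\<^sup>2"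
      by (simp add: mult.assoc)
  qed
  moreover have "(\<Sum>i\<in>A. w i * (\<bar>h i\<bar> powr ((2*\<nu>+1)/(\<nu>+1))) powr r) = (\<Sum>i\<in>A. w i * \<bar>h i\<bar> powr (2 + 1/\<nu>))"
  proof (rule sum.cong[OF refl])
    fix i
    have "(2*\<nu>+1)/(\<nu>+1) * r = (2*\<nu>+1)/\<nu>" using nu by (simp add: r_def)
    also have "\<dots> = 2 + 1/\<nu>" using nu by (simp add: add_divide_distrib)
    finally have "(2*\<nu>+1)/(\<nu>+1) * r = 2 + 1/\<nu>" .
    then show "w i * (\<bar>h i\<bar> powr ((2*\<nu>+1)/(\<nu>+1))) powr r = w i * \<bar>h i\<bar> powr (2 + 1/\<nu>)"
      by (simp add: powr_powr)
  qed
  moreover have "(\<Sum>i\<in>A. w i * (\<bar>h i\<bar> powr (1/(\<nu>+1))) powr s) = (\<Sum>i\<in>A. w i * \<bar>h i\<bar>)"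
  proof (rule sum.cong[OF refl])
    fix i
    have "1/(\<nu>+1) * s = 1" using nu by (simp add: s_def)
    then show "w i * (\<bar>h i\<bar> powr (1/(\<nu>+1))) powr s = w i * \<bar>h i\<bar>"
      by (simp add: powr_powr)
  qed
  moreover have "1/r = \<nu>/(\<nu>+1)" "1/s = 1/(\<nu>+1)" by (auto simp: r_def s_def)
  ultimately show ?thesis by simp
qed

lemma disc_main:
  fixes x :: "'v \<Rightarrow> real" and G :: "('v, 'e) cgraph"
  assumes G: "closed_graph G" and nu: "\<nu> > 2" and mean: "(\<Sum>v\<in>verts G. vmeas G v * x v) = 0"
  shows "(iso_const G \<nu> * rho_sup G powr (-1/2) / 2)
           * ((\<Sum>v\<in>verts G. vmeas G v * \<bar>x v\<bar> powr 2) powr (1/2)) powr (1 + 2/\<nu>)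
           * ((\<Sum>v\<in>verts G. vmeas G v * \<bar>x v\<bar> powr 1) powr (1/1)) powr (-2/\<nu>)
         \<le> sqrt (\<Sum>e\<in>edges G. ewt G e * ((x (tgt G e) - x (src G e))\<^sup>2 / len G e))"
proof -
  define K where "K = iso_const G \<nu>"
  define \<rho> where "\<rho> = rho_sup G"
  define Q where "Q = (\<Sum>e\<in>edges G. ewt G e * ((x (tgt G e) - x (src G e))\<^sup>2 / len G e))"
  define X2 where "X2 = (\<Sum>v\<in>verts G. vmeas G v * \<bar>x v\<bar> powr 2)"
  define X1 where "X1 = (\<Sum>v\<in>verts G. vmeas G v * \<bar>x v\<bar> powr 1)"
  define R where "R = (K * \<rho> powr (-1/2) / 2) * (X2 powr (1/2)) powr (1 + 2/\<nu>) * (X1 powr (1/1)) powr (-2/\<nu>)"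
  have finV: "finite (verts G)" and finE: "finite (edges G)" using G by (auto simp: closed_graph_def)
  have ends: "\<And>e. e \<in> edges G \<Longrightarrow> src G e \<in> verts G \<and> tgt G e \<in> verts G \<and> 0 < len G e \<and> 0 < ewt G e"
    and Vp: "\<And>v. v \<in> verts G \<Longrightarrow> 0 < vmeas G v" using G by (auto simp: closed_graph_def)
  have Q0: "0 \<le> Q" unfolding Q_def
  proof (rule sum_nonneg)
    fix e assume "e \<in> edges G"
    then have "0 < ewt G e" "0 < len G e" using ends by auto
    then show "0 \<le> ewt G e * ((x (tgt G e) - x (src G e))\<^sup>2 / len G e)" by simp
  qed
  have X2eq: "X2 = (\<Sum>v\<in>verts G. vmeas G v * (x v)\<^sup>2)" unfolding X2_def by simp
  have X1eq: "X1 = (\<Sum>v\<in>verts G. vmeas G v * \<bar>x v\<bar>)" unfolding X1_def by simp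
  have X20: "0 \<le> X2" unfolding X2eq using Vp by (intro sum_nonneg) (simp add: less_imp_le)
  have nu0: "\<nu> > 0" "\<nu> > 1" using nu by auto
  have "R \<le> sqrt Q"
  proof (cases "X2 = 0")
    case True
    have "2/\<nu> > 0" using nu0 by simp
    then have "1 + 2/\<nu> \<noteq> 0" by linarith
    then show ?thesis unfolding R_def using True Q0 by simp
  next
    case False
    then have X2p: "X2 > 0" using X20 by simp
    obtain v1 where v1: "v1 \<in> verts G" "x v1 \<noteq> 0"
    proof -
      have "\<not> (\<forall>v\<in>verts G. x v = 0)"
      proof
        assume "\<forall>v\<in>verts G. x v = 0"
        then have "X2 = 0" unfolding X2eq by simp
        with False show False by simp
      qed
      then show ?thesis using that by auto
    qed
    have ne: "verts G \<noteq> {}" using v1 by auto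
    have rho0: "0 \<le> \<rho>" unfolding \<rho>_def by (rule cs_bound(2)[OF G ne])
    show ?thesis
    proof (cases "K \<le> 0 \<or> \<rho> = 0")
      case True
      then show ?thesis
      proof
        assume "K \<le> 0"
        then have "R \<le> 0" unfolding R_def
          by (intro mult_nonpos_nonneg divide_nonpos_pos mult_nonpos_nonneg) auto
        then show ?thesis using Q0 by (meson order_trans real_sqrt_ge_zero)
      next
        assume "\<rho> = 0"
        then have "R = 0" unfolding R_def by simp
        then show ?thesis using Q0 by simp
      qed
    next
      case False
      then have Kp: "K > 0" and rp: "\<rho> > 0" using rho0 by auto
      obtain c where m1: "2 * (\<Sum>v\<in>{v\<in>verts G. x v > c}. vmeas G v) \<le> (\<Sum>v\<in>verts G. vmeas G v)"
        and m2: "2 * (\<Sum>v\<in>{v\<in>verts G. x v < c}. vmeas G v) \<le> (\<Sum>v\<in>verts G. vmeas G v)"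
        using median_exists[OF finV ne, of "vmeas G" x] Vp by (auto intro: less_imp_le)
      define h where "h v = x v - c" for v
      define N1 where "N1 = (\<Sum>v\<in>verts G. vmeas G v * \<bar>h v\<bar>)"
      define N2 where "N2 = (\<Sum>v\<in>verts G. vmeas G v * (h v)\<^sup>2)"
      define T where "T = (\<Sum>v\<in>verts G. vmeas G v * \<bar>h v\<bar> powr (2 + 1/\<nu>))"
      have N1le: "N1 \<le> X1" unfolding N1_def X1eq h_def
        by (rule median_l1[OF finV _ m1 m2]) (use Vp in \<open>auto intro: less_imp_le\<close>)
      have N2ge: "X2 \<le> N2"
      proof -
        have "N2 = (\<Sum>v\<in>verts G. vmeas G v * (x v)\<^sup>2) - 2 * c * (\<Sum>v\<in>verts G. vmeas G v * x v) + c\<^sup>2 * (\<Sum>v\<in>verts G. vmeas G v)"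
          unfolding N2_def h_def
          by (simp add: power2_diff sum.distrib sum_subtractf sum_distrib_left sum_distrib_right algebra_simps)
        moreover have "0 \<le> c\<^sup>2 * (\<Sum>v\<in>verts G. vmeas G v)"
          using Vp by (intro mult_nonneg_nonneg sum_nonneg) (auto intro: less_imp_le)
        ultimately show ?thesis using mean X2eq by simp
      qed
      have N2p: "N2 > 0" using N2ge X2p by simp
      obtain v2 where v2: "v2 \<in> verts G" "h v2 \<noteq> 0"
      proof -
        have "\<not> (\<forall>v\<in>verts G. h v = 0)"
        proof
          assume "\<forall>v\<in>verts G. h v = 0"
          then have "N2 = 0" unfolding N2_def by simp
          with N2p show False by simp
        qed
        then show ?thesis using that by auto
      qed
      have N1p: "N1 > 0"
      proof -
        have "vmeas G v2 * \<bar>h v2\<bar> \<le> N1" unfolding N1_def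
        proof (rule member_le_sum[OF v2(1) _ finV])
          fix y assume "y \<in> verts G - {v2}"
          then have "0 < vmeas G y" using Vp by auto
          then show "0 \<le> vmeas G y * \<bar>h y\<bar>" by simp
        qed
        moreover have "0 < vmeas G v2 * \<bar>h v2\<bar>" using Vp[OF v2(1)] v2(2) by simp
        ultimately show ?thesis by simp
      qed
      define G1 where "G1 v = (max (h v) 0)\<^sup>2" for v
      define G2 where "G2 v = (max (- h v) 0)\<^sup>2" for v
      define \<psi> where "\<psi> v = \<bar>h v\<bar> powr (1/\<nu>)" for v
      have psi0: "\<And>v. v \<in> verts G \<Longrightarrow> 0 \<le> \<psi> v" by (simp add: \<psi>_def)
      have Npsi: "(\<Sum>v\<in>verts G. vmeas G v * \<psi> v powr \<nu>) powr (1/\<nu>) = N1 powr (1/\<nu>)"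
      proof -
        have "\<psi> v powr \<nu> = \<bar>h v\<bar>" for v using nu0 by (simp add: \<psi>_def powr_powr)
        then show ?thesis unfolding N1_def by simp
      qed
      have sup1: "{v\<in>verts G. G1 v > 0} = {v\<in>verts G. x v > c}" by (auto simp: G1_def h_def max_def)
      have sup2: "{v\<in>verts G. G2 v > 0} = {v\<in>verts G. x v < c}" by (auto simp: G2_def h_def max_def)
      have CI: "\<And>n. \<forall>H. card {v\<in>verts G. H v > 0} = n \<longrightarrow> (\<forall>v. 0 \<le> H v) \<longrightarrow>
           2 * (\<Sum>v\<in>{v\<in>verts G. H v > 0}. vmeas G v) \<le> (\<Sum>v\<in>verts G. vmeas G v) \<longrightarrow>
           iso_const G \<nu> * (\<Sum>v\<in>verts G. vmeas G v * H v * \<psi> v)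
             \<le> (\<Sum>v\<in>verts G. vmeas G v * \<psi> v powr \<nu>) powr (1/\<nu>) * EE G H"
      proof -
        have KpI: "iso_const G \<nu> > 0" using Kp unfolding K_def .
        fix n show "?thesis n" by (rule coarea_ind[where \<psi>=\<psi>, OF G nu0(2) KpI psi0])
      qed
      have G1nn: "\<And>v. 0 \<le> G1 v" by (simp add: G1_def)
      have G2nn: "\<And>v. 0 \<le> G2 v" by (simp add: G2_def)
      have half1: "2 * (\<Sum>v\<in>{v\<in>verts G. G1 v > 0}. vmeas G v) \<le> (\<Sum>v\<in>verts G. vmeas G v)"
        using m1 unfolding sup1 .
      have half2: "2 * (\<Sum>v\<in>{v\<in>verts G. G2 v > 0}. vmeas G v) \<le> (\<Sum>v\<in>verts G. vmeas G v)"
        using m2 unfolding sup2 .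
      have c1: "K * (\<Sum>v\<in>verts G. vmeas G v * G1 v * \<psi> v) \<le> N1 powr (1/\<nu>) * EE G G1"
        using CI[rule_format, OF refl G1nn half1] unfolding K_def Npsi .
      have c2: "K * (\<Sum>v\<in>verts G. vmeas G v * G2 v * \<psi> v) \<le> N1 powr (1/\<nu>) * EE G G2"
        using CI[rule_format, OF refl G2nn half2] unfolding K_def Npsi .
      have sumT: "(\<Sum>v\<in>verts G. vmeas G v * G1 v * \<psi> v) + (\<Sum>v\<in>verts G. vmeas G v * G2 v * \<psi> v) = T"
        unfolding T_def sum.distrib[symmetric]
      proof (rule sum.cong[OF refl])
        fix v
        have s1: "G1 v + G2 v = \<bar>h v\<bar> powr 2" by (simp add: G1_def G2_def max_def)
        have s2: "\<bar>h v\<bar> powr (2 + 1/\<nu>) = \<bar>h v\<bar> powr 2 * \<psi> v" by (simp add: \<psi>_def powr_add)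
        have "vmeas G v * G1 v * \<psi> v + vmeas G v * G2 v * \<psi> v = vmeas G v * (G1 v + G2 v) * \<psi> v"
          by (simp add: algebra_simps)
        also have "\<dots> = vmeas G v * (\<bar>h v\<bar> powr 2 * \<psi> v)" by (simp only: s1 mult.assoc)
        also have "\<dots> = vmeas G v * \<bar>h v\<bar> powr (2 + 1/\<nu>)" by (simp only: s2)
        finally show "vmeas G v * G1 v * \<psi> v + vmeas G v * G2 v * \<psi> v = vmeas G v * \<bar>h v\<bar> powr (2 + 1/\<nu>)" .
      qed
      define Z where "Z = (\<Sum>e\<in>edges G. ewt G e * \<bar>h (src G e) - h (tgt G e)\<bar> * (\<bar>h (src G e)\<bar> + \<bar>h (tgt G e)\<bar>))"
      have EEZ: "EE G G1 + EE G G2 \<le> Z"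
        unfolding EE_def Z_def sum.distrib[symmetric]
      proof (rule sum_mono)
        fix e assume e: "e \<in> edges G"
        have w: "0 \<le> ewt G e" using ends[OF e] by simp
        have "ewt G e * (\<bar>G1 (src G e) - G1 (tgt G e)\<bar> + \<bar>G2 (src G e) - G2 (tgt G e)\<bar>)
              \<le> ewt G e * (\<bar>h (src G e) - h (tgt G e)\<bar> * (\<bar>h (src G e)\<bar> + \<bar>h (tgt G e)\<bar>))"
          unfolding G1_def G2_def by (rule mult_left_mono[OF pm_pointwise w])
        then show "ewt G e * \<bar>G1 (src G e) - G1 (tgt G e)\<bar> + ewt G e * \<bar>G2 (src G e) - G2 (tgt G e)\<bar>
              \<le> ewt G e * \<bar>h (src G e) - h (tgt G e)\<bar> * (\<bar>h (src G e)\<bar> + \<bar>h (tgt G e)\<bar>)"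
          by (simp add: algebra_simps)
      qed
      have Zb: "Z \<le> 2 * sqrt \<rho> * sqrt Q * sqrt N2"
      proof -
        have "(\<Sum>e\<in>edges G. ewt G e * ((h (tgt G e) - h (src G e))\<^sup>2 / len G e)) = Q"
          unfolding Q_def h_def by simp
        then show ?thesis using cs_bound(1)[OF G ne, of h] unfolding Z_def \<rho>_def N2_def by simp
      qed
      have Hd: "N2 \<le> T powr (\<nu>/(\<nu>+1)) * N1 powr (1/(\<nu>+1))"
        unfolding N2_def T_def N1_def
        by (rule holder2[OF finV _ nu0(1)]) (use Vp in \<open>auto intro: less_imp_le\<close>)
      have T0: "0 \<le> T" unfolding T_def using Vp by (intro sum_nonneg) (simp add: less_imp_le)
      have step1: "N2 powr ((\<nu>+1)/\<nu>) \<le> T * N1 powr (1/\<nu>)"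
      proof -
        have "N2 powr ((\<nu>+1)/\<nu>) \<le> (T powr (\<nu>/(\<nu>+1)) * N1 powr (1/(\<nu>+1))) powr ((\<nu>+1)/\<nu>)"
          by (rule powr_mono2[OF _ _ Hd]) (use nu0 N2p in auto)
        also have "\<dots> = T powr (\<nu>/(\<nu>+1) * ((\<nu>+1)/\<nu>)) * N1 powr (1/(\<nu>+1) * ((\<nu>+1)/\<nu>))"
          by (simp add: powr_mult powr_powr)
        also have "\<nu>/(\<nu>+1) * ((\<nu>+1)/\<nu>) = 1" using nu0 by simp
        also have "1/(\<nu>+1) * ((\<nu>+1)/\<nu>) = 1/\<nu>" using nu0 by simp
        finally show ?thesis using T0 by simp
      qed
      have step2: "K * T \<le> N1 powr (1/\<nu>) * (2 * sqrt \<rho> * sqrt Q * sqrt N2)"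
      proof -
        have "K * T \<le> N1 powr (1/\<nu>) * (EE G G1 + EE G G2)"
          using c1 c2 sumT by (simp add: algebra_simps flip: sumT)
        also have "\<dots> \<le> N1 powr (1/\<nu>) * (2 * sqrt \<rho> * sqrt Q * sqrt N2)"
          using EEZ Zb by (intro mult_left_mono) auto
        finally show ?thesis .
      qed
      define a where "a = 1/2 + 1/\<nu>"
      have step3: "K * N2 powr a \<le> N1 powr (2/\<nu>) * (2 * sqrt \<rho> * sqrt Q)"
      proof -
        have "K * N2 powr ((\<nu>+1)/\<nu>) \<le> K * (T * N1 powr (1/\<nu>))"
          using step1 Kp by (intro mult_left_mono) auto
        also have "\<dots> = (K * T) * N1 powr (1/\<nu>)" by simp
        also have "\<dots> \<le> (N1 powr (1/\<nu>) * (2 * sqrt \<rho> * sqrt Q * sqrt N2)) * N1 powr (1/\<nu>)"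
          using step2 by (intro mult_right_mono) auto
        also have "\<dots> = (N1 powr (2/\<nu>) * (2 * sqrt \<rho> * sqrt Q)) * sqrt N2"
        proof -
          have "N1 powr (1/\<nu>) * N1 powr (1/\<nu>) = N1 powr (2/\<nu>)" by (simp flip: powr_add)
          then show ?thesis by (simp add: algebra_simps)
        qed
        finally have A: "K * N2 powr ((\<nu>+1)/\<nu>) \<le> (N1 powr (2/\<nu>) * (2 * sqrt \<rho> * sqrt Q)) * sqrt N2" .
        have "N2 powr ((\<nu>+1)/\<nu>) = N2 powr a * sqrt N2"
        proof -
          have "(\<nu>+1)/\<nu> = a + 1/2" unfolding a_def using nu0 by (simp add: field_simps)
          then show ?thesis using N2p by (simp add: powr_add powr_half_sqrt)
        qed
        then have "(K * N2 powr a) * sqrt N2 \<le> (N1 powr (2/\<nu>) * (2 * sqrt \<rho> * sqrt Q)) * sqrt N2"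
          using A by (simp add: mult.assoc)
        then show ?thesis using N2p by simp
      qed
      have bound: "R \<le> (K * \<rho> powr (-1/2) / 2) * N2 powr a * N1 powr (-2/\<nu>)"
      proof -
        have e1: "(X2 powr (1/2)) powr (1 + 2/\<nu>) = X2 powr a"
          unfolding a_def by (simp add: powr_powr field_simps)
        have e2: "(X1 powr (1/1)) powr (-2/\<nu>) = X1 powr (-2/\<nu>)" using N1le N1p by simp
        have i1: "X2 powr a \<le> N2 powr a" using N2ge X20 nu0 unfolding a_def by (intro powr_mono2) auto
        have i2: "X1 powr (-2/\<nu>) \<le> N1 powr (-2/\<nu>)" using N1le N1p nu0 by (intro powr_mono2') auto
        have k0: "0 \<le> K * \<rho> powr (-1/2) / 2" using Kp by simp
        show ?thesis unfolding R_def e1 e2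
          using i1 i2 k0 by (intro mult_mono) auto
      qed
      also have "\<dots> = (K * N2 powr a) / (N1 powr (2/\<nu>) * (2 * sqrt \<rho>))"
      proof -
        have "\<rho> powr (-1/2) = inverse (sqrt \<rho>)" using rp by (simp add: powr_minus powr_half_sqrt)
        moreover have "N1 powr (-2/\<nu>) = inverse (N1 powr (2/\<nu>))" by (simp add: powr_minus)
        ultimately show ?thesis by (simp add: field_simps)
      qed
      also have "\<dots> \<le> sqrt Q"
        using step3 N1p rp by (simp add: divide_le_eq algebra_simps)
      finally show ?thesis .
    qed
  qed
  then show ?thesis unfolding R_def K_def \<rho>_def X2_def X1_def Q_def .
qed

theorem mainTheorem9:
  fixes G :: "('v, 'e) cgraph" and \<nu> :: real and f :: "('v, 'e) gpoint \<Rightarrow> real"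
  assumes "closed_graph G" and "\<nu> > 2" and "C1_Dir G f"
    and "(\<Sum>v\<in>verts G. vmeas G v * f (Vtx v)) = 0"
  shows "grad_norm2 G f \<ge>
    (iso_const G \<nu> * rho_sup G powr (-1/2) / 2) * vnorm G 2 f powr (1 + 2 / \<nu>) * vnorm G 1 f powr (-2 / \<nu>)"
proof -
  note G = assms(1)
  have D: "(iso_const G \<nu> * rho_sup G powr (-1/2) / 2)
           * ((\<Sum>v\<in>verts G. vmeas G v * \<bar>f (Vtx v)\<bar> powr 2) powr (1/2)) powr (1 + 2/\<nu>)
           * ((\<Sum>v\<in>verts G. vmeas G v * \<bar>f (Vtx v)\<bar> powr 1) powr (1/1)) powr (-2/\<nu>)
         \<le> sqrt (\<Sum>e\<in>edges G. ewt G e * ((f (Vtx (tgt G e)) - f (Vtx (src G e)))\<^sup>2 / len G e))"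
    using disc_main[OF G assms(2), of "\<lambda>v. f (Vtx v)"] assms(4) by simp
  have "sqrt (\<Sum>e\<in>edges G. ewt G e * ((f (Vtx (tgt G e)) - f (Vtx (src G e)))\<^sup>2 / len G e)) \<le> grad_norm2 G f"
    unfolding grad_norm2_def
  proof (rule real_sqrt_le_mono, rule sum_mono)
    fix e assume e: "e \<in> edges G"
    have "0 \<le> ewt G e" using G e by (auto simp: closed_graph_def intro: less_imp_le)
    then show "ewt G e * ((f (Vtx (tgt G e)) - f (Vtx (src G e)))\<^sup>2 / len G e)
        \<le> ewt G e * integral {0<..<len G e} (\<lambda>t. (deriv (\<lambda>s. f (EPt e s)) t)\<^sup>2)"
      by (rule mult_left_mono[OF edge_grad[OF G e assms(3)]])
  qed
  with D show ?thesis unfolding vnorm_def by linarith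
qed

end
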